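(* Let $F$ be a semi-flow on a connected metrizable space $X$ and let $S$ be an $F$-stream. Then, for every $x\in X$: (1) $\mathrm{Down}_S(x)\supset\mathcal{O}_F(x)\cup\mathrm{Down}_S(\Omega_F(x))$; (2) $\mathrm{Down}_S(x)\supset\mathcal{O}_F(x)\cup\mathrm{Down}_S(y)$ for all $y\in\mathcal{O}_F(x)$.
   Context: A semi-flow on $X$ is a continuous map $F:\mathbb{T}\times X\to X$, $(t,x)\mapsto F^t(x)$, where $\mathbb{T}=\{0,1,2,\dots\}$ or $[0,\infty)$, with $F^0=\mathrm{id}$ and $F^{t_1+t_2}=F^{t_2}\circ F^{t_1}$. Put $\mathcal{O}_F(x)=\{F^t(x):t\in\mathbb{T}\}$ and $\mathcal{O}_F=\{(x,y):y\in\mathcal{O}_F(x)\}$. $\Omega_F(x)$ is the set of limits of $F^{t_n}(x)$ with $t_n\to\infty$. An $F$-stream is a reflexive, transitive relation $S\subset X\times X$ that is closed in $X\times X$ and contains $\mathcal{O}_F$. $\mathrm{Down}_S(x)=\{y:(x,y)\in S\}$ and $\mathrm{Down}_S(M)=\bigcup_{z\in M}\mathrm{Down}_S(z)$. *)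

theory Defs
  imports "HOL-Analysis.Analysis"
begin

definition time_domain :: "real set \<Rightarrow> bool" where
  "time_domain T \<longleftrightarrow> T = {t. \<exists>n::nat. t = real n} \<or> T = {0..}"

definition semiflow :: "real set \<Rightarrow> (real \<Rightarrow> 'a::topological_space \<Rightarrow> 'a) \<Rightarrow> bool" where
  "semiflow T F \<longleftrightarrow> time_domain T
     \<and> continuous_on (T \<times> UNIV) (\<lambda>(t, x). F t x)
     \<and> (\<forall>x. F 0 x = x)
     \<and> (\<forall>t1\<in>T. \<forall>t2\<in>T. \<forall>x. F (t1 + t2) x = F t2 (F t1 x))"

definition orbit :: "real set \<Rightarrow> (real \<Rightarrow> 'a \<Rightarrow> 'a) \<Rightarrow> 'a \<Rightarrow> 'a set" where
  "orbit T F x = {F t x | t. t \<in> T}"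

definition orbit_rel :: "real set \<Rightarrow> (real \<Rightarrow> 'a \<Rightarrow> 'a) \<Rightarrow> ('a \<times> 'a) set" where
  "orbit_rel T F = {(x, y). y \<in> orbit T F x}"

definition omega_limit :: "real set \<Rightarrow> (real \<Rightarrow> 'a::topological_space \<Rightarrow> 'a) \<Rightarrow> 'a \<Rightarrow> 'a set" where
  "omega_limit T F x = {y. \<exists>ts::nat \<Rightarrow> real. (\<forall>n. ts n \<in> T) \<and> filterlim ts at_top sequentially
       \<and> ((\<lambda>n. F (ts n) x) \<longlongrightarrow> y) sequentially}"

definition stream :: "real set \<Rightarrow> (real \<Rightarrow> 'a::topological_space \<Rightarrow> 'a) \<Rightarrow> ('a \<times> 'a) set \<Rightarrow> bool" where
  "stream T F S \<longleftrightarrow> refl S \<and> trans S \<and> closed S \<and> orbit_rel T F \<subseteq> S"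

definition Down :: "('a \<times> 'a) set \<Rightarrow> 'a \<Rightarrow> 'a set" where
  "Down S x = {y. (x, y) \<in> S}"

definition Down_set :: "('a \<times> 'a) set \<Rightarrow> 'a set \<Rightarrow> 'a set" where
  "Down_set S M = (\<Union>z\<in>M. Down S z)"

end

theory Submission
  imports Defs
begin

theorem proposition18:
  fixes T :: "real set" and F :: "real \<Rightarrow> 'a::metric_space \<Rightarrow> 'a" and S :: "('a \<times> 'a) set"
  assumes "connected (UNIV :: 'a set)"
    and "semiflow T F"
    and "stream T F S"
  shows "\<forall>x. (orbit T F x \<union> Down_set S (omega_limit T F x) \<subseteq> Down S x)
            \<and> (\<forall>y\<in>orbit T F x. orbit T F x \<union> Down S y \<subseteq> Down S x)"
proof -
  have tr: "trans S" and cl: "closed S" and orb: "orbit_rel T F \<subseteq> S"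
    using assms(3) unfolding stream_def by simp_all
  have o1: "(x, y) \<in> S" if oy: "y \<in> orbit T F x" for x y
  proof -
    have "(x, y) \<in> orbit_rel T F" using oy unfolding orbit_rel_def by simp
    then show ?thesis using orb by (rule subsetD[rotated])
  qed
  have o2: "(x, y) \<in> S" if om: "y \<in> omega_limit T F x" for x y
  proof -
    from om obtain ts where ts1: "\<forall>n. ts n \<in> T"
      and ts2: "((\<lambda>n. F (ts n) x) \<longlongrightarrow> y) sequentially"
      unfolding omega_limit_def mem_Collect_eq by (elim exE conjE)
    have mem: "\<forall>n. (x, F (ts n) x) \<in> S"
    proof
      fix n
      have "F (ts n) x \<in> orbit T F x" unfolding orbit_def using ts1 by blast
      then show "(x, F (ts n) x) \<in> S" by (rule o1)
    qed
    have lim: "((\<lambda>n. (x, F (ts n) x)) \<longlongrightarrow> (x, y)) sequentially"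
      using ts2 by (intro tendsto_Pair tendsto_const)
    show ?thesis using closed_sequentially[OF cl, of "\<lambda>n. (x, F (ts n) x)", OF spec[OF mem] lim] .
  qed
  have dn: "Down S y \<subseteq> Down S x" if xy: "(x, y) \<in> S" for x y
  proof
    fix z assume "z \<in> Down S y"
    then have "(y, z) \<in> S" unfolding Down_def by simp
    then have "(x, z) \<in> S" using tr xy by (rule transD[rotated 2])
    then show "z \<in> Down S x" unfolding Down_def by simp
  qed
  show ?thesis
  proof (intro allI conjI ballI)
    fix x
    show "orbit T F x \<union> Down_set S (omega_limit T F x) \<subseteq> Down S x"
    proof
      fix z assume "z \<in> orbit T F x \<union> Down_set S (omega_limit T F x)"
      then show "z \<in> Down S x"
      proof
        assume "z \<in> orbit T F x"
        then show ?thesis using o1 unfolding Down_def by simp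
      next
        assume "z \<in> Down_set S (omega_limit T F x)"
        then obtain w where "w \<in> omega_limit T F x" "z \<in> Down S w"
          unfolding Down_set_def by blast
        then show ?thesis using o2 dn by blast
      qed
    qed
    fix y assume yo: "y \<in> orbit T F x"
    show "orbit T F x \<union> Down S y \<subseteq> Down S x"
    proof
      fix z assume "z \<in> orbit T F x \<union> Down S y"
      then show "z \<in> Down S x"
      proof
        assume "z \<in> orbit T F x"
        then show ?thesis using o1 unfolding Down_def by simp
      next
        assume "z \<in> Down S y"
        then show ?thesis using dn[OF o1[OF yo]] by blast
      qed
    qed
  qed
qed

end
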